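(* For the additive noise model with $N$ items and $K$ defectives, random Bernoulli$(1/K)$ design and maximum-likelihood decoding, in the regime $N,K\to\infty$ with $K=o(N)$, a number of tests $T=O\!\left(\frac{K\log N}{1-q}\right)$ is achievable (arbitrarily small average error probability), where $q\in[0,1)$ is the parameter of the Bernoulli noise.
   Context: Design: $N\times T$ binary matrix with i.i.d. Bernoulli$(1/K)$ entries, $X_j(t)=1$ iff item $j$ is in test $t$. Additive noise model: for defective set $S$ ($|S|=K$), $Y(t)=\left(\bigvee_{j\in S}X_j(t)\right)\vee W(t)$ where $W(1),\dots,W(T)$ are i.i.d. Bernoulli$(q)$, independent of the design. The ML decoder chooses a $K$-subset $S'$ maximizing $p(Y^T\mid\mathbf X_{S'})$. Average error probability is averaged over the design, the noise, and $S$ uniform among $K$-subsets. *)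

theory Defs
  imports Complex_Main
begin

text \<open>Items are 0..<N, tests are 0..<T. A design is the set D of pairs (j,t)
  with X_j(t)=1; a noise realisation is the set W of tests t with W(t)=1;
  an outcome is the set of tests t with Y(t)=1.\<close>

definition design_prob :: "nat \<Rightarrow> nat \<Rightarrow> nat \<Rightarrow> (nat \<times> nat) set \<Rightarrow> real" where
  "design_prob N K T D =
     (\<Prod>p\<in>{..<N} \<times> {..<T}. if p \<in> D then 1 / real K else 1 - 1 / real K)"

definition noise_prob :: "real \<Rightarrow> nat \<Rightarrow> nat set \<Rightarrow> real" where
  "noise_prob q T W = (\<Prod>t\<in>{..<T}. if t \<in> W then q else 1 - q)"

definition outcome :: "nat \<Rightarrow> (nat \<times> nat) set \<Rightarrow> nat set \<Rightarrow> nat set \<Rightarrow> nat set" where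
  "outcome T D S W = {t. t < T \<and> ((\<exists>j\<in>S. (j, t) \<in> D) \<or> t \<in> W)}"

definition likelihood :: "real \<Rightarrow> nat \<Rightarrow> (nat \<times> nat) set \<Rightarrow> nat set \<Rightarrow> nat set \<Rightarrow> real" where
  "likelihood q T D S' Y =
     (\<Prod>t\<in>{..<T}. if (\<exists>j\<in>S'. (j, t) \<in> D)
                    then (if t \<in> Y then 1 else 0)
                    else (if t \<in> Y then q else 1 - q))"

definition subsets_K :: "nat \<Rightarrow> nat \<Rightarrow> nat set set" where
  "subsets_K N K = {S. S \<subseteq> {..<N} \<and> card S = K}"

text \<open>ML decoding error: some other K-subset has likelihood at least that of the
  true set (ties are counted as errors).\<close>
definition ml_error :: "real \<Rightarrow> nat \<Rightarrow> nat \<Rightarrow> nat \<Rightarrow> (nat \<times> nat) set \<Rightarrow> nat set \<Rightarrow> nat set \<Rightarrow> bool" where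
  "ml_error q N K T D S Y \<longleftrightarrow>
     (\<exists>S'\<in>subsets_K N K. S' \<noteq> S \<and> likelihood q T D S' Y \<ge> likelihood q T D S Y)"

definition avg_error_prob :: "real \<Rightarrow> nat \<Rightarrow> nat \<Rightarrow> nat \<Rightarrow> real" where
  "avg_error_prob q N K T =
     (1 / real (N choose K)) *
     (\<Sum>S\<in>subsets_K N K. \<Sum>D\<in>Pow ({..<N} \<times> {..<T}). \<Sum>W\<in>Pow {..<T}.
        design_prob N K T D * noise_prob q T W *
        (if ml_error q N K T D S (outcome T D S W) then 1 else 0))"

end

theory Submission
  imports Defs
begin

lemma sum_Pow_prod:
  fixes h :: "'a \<Rightarrow> bool \<Rightarrow> real"
  assumes "finite A"
  shows "(\<Sum>X\<in>Pow A. \<Prod>i\<in>A. h i (i \<in> X)) = (\<Prod>i\<in>A. h i True + h i False)"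
proof -
  have "(\<Prod>i\<in>A. h i True + h i False) = (\<Sum>X\<in>Pow A. (\<Prod>x\<in>X. h x True) * (\<Prod>x\<in>A-X. h x False))"
    by (rule prod_add[OF assms])
  also have "\<dots> = (\<Sum>X\<in>Pow A. \<Prod>i\<in>A. h i (i \<in> X))"
  proof (rule sum.cong[OF refl])
    fix X assume X: "X \<in> Pow A"
    have "(\<Prod>i\<in>A. h i (i \<in> X)) = (\<Prod>i\<in>A. if i \<in> X then h i True else h i False)"
      by (rule prod.cong) auto
    also have "\<dots> = (\<Prod>x\<in>A \<inter> {x. x \<in> X}. h x True) * (\<Prod>x\<in>A \<inter> - {x. x \<in> X}. h x False)"
      by (rule prod.If_cases[OF assms])
    also have "A \<inter> {x. x \<in> X} = X" using X by auto
    also have "A \<inter> - {x. x \<in> X} = A - X" by auto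
    finally show "(\<Prod>x\<in>X. h x True) * (\<Prod>x\<in>A-X. h x False) = (\<Prod>i\<in>A. h i (i \<in> X))" by simp
  qed
  finally show ?thesis by simp
qed

lemma sum_Pow_Un:
  assumes "finite B" "finite C" "B \<inter> C = {}"
  shows "(\<Sum>X\<in>Pow (B \<union> C). f X) = (\<Sum>X\<in>Pow B. \<Sum>Y\<in>Pow C. f (X \<union> Y))"
proof -
  have bij: "bij_betw (\<lambda>(X,Y). X \<union> Y) (Pow B \<times> Pow C) (Pow (B \<union> C))"
  proof (rule bij_betwI')
    fix x y assume xy: "x \<in> Pow B \<times> Pow C" "y \<in> Pow B \<times> Pow C"
    obtain X1 Y1 where x: "x = (X1, Y1)" by (cases x)
    obtain X2 Y2 where y: "y = (X2, Y2)" by (cases y)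
    have s: "X1 \<subseteq> B" "Y1 \<subseteq> C" "X2 \<subseteq> B" "Y2 \<subseteq> C" using xy x y by auto
    show "((case x of (X, Y) \<Rightarrow> X \<union> Y) = (case y of (X, Y) \<Rightarrow> X \<union> Y)) = (x = y)"
    proof
      assume e: "(case x of (X, Y) \<Rightarrow> X \<union> Y) = (case y of (X, Y) \<Rightarrow> X \<union> Y)"
      then have e': "X1 \<union> Y1 = X2 \<union> Y2" using x y by simp
      have "X1 = (X1 \<union> Y1) \<inter> B" "X2 = (X2 \<union> Y2) \<inter> B" "Y1 = (X1 \<union> Y1) \<inter> C" "Y2 = (X2 \<union> Y2) \<inter> C"
        using s assms(3) by auto
      then have "X1 = X2" "Y1 = Y2" using e' by metis+
      then show "x = y" using x y by simp
    qed simp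
  next
    fix x assume "x \<in> Pow B \<times> Pow C" then show "(case x of (X, Y) \<Rightarrow> X \<union> Y) \<in> Pow (B \<union> C)" by auto
  next
    fix Z assume "Z \<in> Pow (B \<union> C)"
    then show "\<exists>x\<in>Pow B \<times> Pow C. Z = (case x of (X, Y) \<Rightarrow> X \<union> Y)"
      by (intro bexI[of _ "(Z \<inter> B, Z \<inter> C)"]) auto
  qed
  have "(\<Sum>X\<in>Pow (B \<union> C). f X) = (\<Sum>p\<in>Pow B \<times> Pow C. f ((\<lambda>(X,Y). X \<union> Y) p))"
    using sum.reindex_bij_betw[OF bij, of f] by simp
  also have "\<dots> = (\<Sum>(X,Y)\<in>Pow B \<times> Pow C. f (X \<union> Y))"
    by (intro sum.cong refl) (auto split: prod.splits)
  also have "\<dots> = (\<Sum>X\<in>Pow B. \<Sum>Y\<in>Pow C. f (X \<union> Y))"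
    by (simp add: sum.cartesian_product)
  finally show ?thesis .
qed

lemma prod01:
  assumes "finite A"
  shows "(\<Prod>t\<in>A. if P t then 0 else 1::real) = (if \<exists>t\<in>A. P t then 0 else 1)"
  using assms by (cases "\<exists>t\<in>A. P t") auto

definition Fm :: "real \<Rightarrow> real \<Rightarrow> real \<Rightarrow> real \<Rightarrow> (nat set \<Rightarrow> bool \<Rightarrow> real) \<Rightarrow> nat set \<Rightarrow> nat \<Rightarrow> (nat \<times> nat) set \<Rightarrow> nat set \<Rightarrow> real" where
  "Fm \<alpha> \<beta> \<gamma> \<delta> g A T D W = (\<Prod>p\<in>A\<times>{..<T}. if p\<in>D then \<alpha> else \<beta>) * (\<Prod>t\<in>{..<T}. if t\<in>W then \<gamma> else \<delta>) *
     (\<Prod>t\<in>{..<T}. g {i\<in>A. (i,t)\<in>D} (t\<in>W))"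

definition Gm :: "real \<Rightarrow> real \<Rightarrow> real \<Rightarrow> real \<Rightarrow> (nat set \<Rightarrow> bool \<Rightarrow> real) \<Rightarrow> nat set \<Rightarrow> nat \<Rightarrow> (nat \<times> nat) set \<Rightarrow> nat set \<Rightarrow> real" where
  "Gm \<alpha> \<beta> \<gamma> \<delta> g A T D W = (\<Prod>p\<in>A\<times>{T}. if p\<in>D then \<alpha> else \<beta>) * (\<Prod>t\<in>{T}. if t\<in>W then \<gamma> else \<delta>) *
     g {i\<in>A. (i,T)\<in>D} (T\<in>W)"

lemma Fm_split:
  assumes "finite A" "D0 \<subseteq> A\<times>{..<T}" "D1 \<subseteq> A\<times>{T}" "W0 \<subseteq> {..<T}" "W1 \<subseteq> {T}"
  shows "Fm \<alpha> \<beta> \<gamma> \<delta> g A (Suc T) (D0 \<union> D1) (W0 \<union> W1) = Fm \<alpha> \<beta> \<gamma> \<delta> g A T D0 W0 * Gm \<alpha> \<beta> \<gamma> \<delta> g A T D1 W1"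
proof -
  have e1: "A\<times>{..<Suc T} = A\<times>{..<T} \<union> A\<times>{T}" by auto
  have e2: "{..<Suc T} = {..<T} \<union> {T}" by auto
  have p1: "(\<Prod>p\<in>A\<times>{..<Suc T}. if p\<in>D0 \<union> D1 then \<alpha> else \<beta>) =
     (\<Prod>p\<in>A\<times>{..<T}. if p\<in>D0 then \<alpha> else \<beta>) * (\<Prod>p\<in>A\<times>{T}. if p\<in>D1 then \<alpha> else \<beta>)"
  proof -
    have "(\<Prod>p\<in>A\<times>{..<Suc T}. if p\<in>D0 \<union> D1 then \<alpha> else \<beta>) =
      (\<Prod>p\<in>A\<times>{..<T}. if p\<in>D0 \<union> D1 then \<alpha> else \<beta>) * (\<Prod>p\<in>A\<times>{T}. if p\<in>D0 \<union> D1 then \<alpha> else \<beta>)"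
      unfolding e1 by (rule prod.union_disjoint) (use assms(1) in auto)
    also have "(\<Prod>p\<in>A\<times>{..<T}. if p\<in>D0 \<union> D1 then \<alpha> else \<beta>) = (\<Prod>p\<in>A\<times>{..<T}. if p\<in>D0 then \<alpha> else \<beta>)"
      using assms(3) by (intro prod.cong) auto
    also have "(\<Prod>p\<in>A\<times>{T}. if p\<in>D0 \<union> D1 then \<alpha> else \<beta>) = (\<Prod>p\<in>A\<times>{T}. if p\<in>D1 then \<alpha> else \<beta>)"
      using assms(2) by (intro prod.cong) auto
    finally show ?thesis .
  qed
  have p2: "(\<Prod>t\<in>{..<Suc T}. if t\<in>W0 \<union> W1 then \<gamma> else \<delta>) =
     (\<Prod>t\<in>{..<T}. if t\<in>W0 then \<gamma> else \<delta>) * (\<Prod>t\<in>{T}. if t\<in>W1 then \<gamma> else \<delta>)"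
  proof -
    have "(\<Prod>t\<in>{..<Suc T}. if t\<in>W0 \<union> W1 then \<gamma> else \<delta>) =
      (\<Prod>t\<in>{..<T}. if t\<in>W0 \<union> W1 then \<gamma> else \<delta>) * (\<Prod>t\<in>{T}. if t\<in>W0 \<union> W1 then \<gamma> else \<delta>)"
      unfolding e2 by (rule prod.union_disjoint) auto
    also have "(\<Prod>t\<in>{..<T}. if t\<in>W0 \<union> W1 then \<gamma> else \<delta>) = (\<Prod>t\<in>{..<T}. if t\<in>W0 then \<gamma> else \<delta>)"
      using assms(5) by (intro prod.cong) auto
    also have "(\<Prod>t\<in>{T}. if t\<in>W0 \<union> W1 then \<gamma> else \<delta>) = (\<Prod>t\<in>{T}. if t\<in>W1 then \<gamma> else \<delta>)"
      using assms(4) by auto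
    finally show ?thesis .
  qed
  have p3: "(\<Prod>t\<in>{..<Suc T}. g {i\<in>A. (i,t)\<in>D0 \<union> D1} (t\<in>W0 \<union> W1)) =
     (\<Prod>t\<in>{..<T}. g {i\<in>A. (i,t)\<in>D0} (t\<in>W0)) * g {i\<in>A. (i,T)\<in>D1} (T\<in>W1)"
  proof -
    have "(\<Prod>t\<in>{..<Suc T}. g {i\<in>A. (i,t)\<in>D0 \<union> D1} (t\<in>W0 \<union> W1)) =
       (\<Prod>t\<in>{..<T}. g {i\<in>A. (i,t)\<in>D0 \<union> D1} (t\<in>W0 \<union> W1)) * g {i\<in>A. (i,T)\<in>D0 \<union> D1} (T\<in>W0 \<union> W1)"
      by simp
    also have "(\<Prod>t\<in>{..<T}. g {i\<in>A. (i,t)\<in>D0 \<union> D1} (t\<in>W0 \<union> W1)) = (\<Prod>t\<in>{..<T}. g {i\<in>A. (i,t)\<in>D0} (t\<in>W0))"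
    proof (intro prod.cong refl)
      fix t assume "t \<in> {..<T}"
      then have "{i\<in>A. (i,t)\<in>D0 \<union> D1} = {i\<in>A. (i,t)\<in>D0}" "(t\<in>W0 \<union> W1) = (t \<in> W0)"
        using assms(3,5) by auto
      then show "g {i\<in>A. (i,t)\<in>D0 \<union> D1} (t\<in>W0 \<union> W1) = g {i\<in>A. (i,t)\<in>D0} (t\<in>W0)" by simp
    qed
    also have "g {i\<in>A. (i,T)\<in>D0 \<union> D1} (T\<in>W0 \<union> W1) = g {i\<in>A. (i,T)\<in>D1} (T\<in>W1)"
    proof -
      have "{i\<in>A. (i,T)\<in>D0 \<union> D1} = {i\<in>A. (i,T)\<in>D1}" "(T\<in>W0 \<union> W1) = (T \<in> W1)"
        using assms(2,4) by auto
      then show ?thesis by simp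
    qed
    finally show ?thesis .
  qed
  show ?thesis unfolding Fm_def Gm_def p1 p2 p3 by (simp add: ac_simps)
qed

lemma Gm_sum:
  assumes "finite A"
  shows "(\<Sum>D1\<in>Pow (A\<times>{T}). \<Sum>W1\<in>Pow {T}. Gm \<alpha> \<beta> \<gamma> \<delta> g A T D1 W1) =
    (\<Sum>c\<in>Pow A. (\<Prod>i\<in>A. if i\<in>c then \<alpha> else \<beta>) * (\<gamma> * g c True + \<delta> * g c False))"
proof -
  have inj: "inj_on (\<lambda>c. c \<times> {T}) (Pow A)" by (auto simp: inj_on_def)
  have img: "(\<lambda>c. c \<times> {T}) ` Pow A = Pow (A\<times>{T})"
  proof
    show "Pow (A\<times>{T}) \<subseteq> (\<lambda>c. c \<times> {T}) ` Pow A"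
    proof
      fix X assume X: "X \<in> Pow (A\<times>{T})"
      then have "X = {i. (i,T)\<in>X} \<times> {T}" by auto
      moreover have "{i. (i,T)\<in>X} \<in> Pow A" using X by auto
      ultimately show "X \<in> (\<lambda>c. c \<times> {T}) ` Pow A" by blast
    qed
  qed auto
  have "(\<Sum>D1\<in>Pow (A\<times>{T}). \<Sum>W1\<in>Pow {T}. Gm \<alpha> \<beta> \<gamma> \<delta> g A T D1 W1) =
       (\<Sum>c\<in>Pow A. \<Sum>W1\<in>Pow {T}. Gm \<alpha> \<beta> \<gamma> \<delta> g A T (c\<times>{T}) W1)"
    unfolding img[symmetric] by (subst sum.reindex[OF inj]) simp
  also have "\<dots> = (\<Sum>c\<in>Pow A. (\<Prod>i\<in>A. if i\<in>c then \<alpha> else \<beta>) * (\<gamma> * g c True + \<delta> * g c False))"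
  proof (rule sum.cong[OF refl])
    fix c assume c: "c \<in> Pow A"
    have i1: "inj_on (\<lambda>i. (i,T)) A" by (auto simp: inj_on_def)
    have "A \<times> {T} = (\<lambda>i. (i,T)) ` A" by auto
    then have pr: "(\<Prod>p\<in>A\<times>{T}. if p\<in>c\<times>{T} then \<alpha> else \<beta>) = (\<Prod>i\<in>A. if i\<in>c then \<alpha> else \<beta>)"
      by (simp add: prod.reindex[OF i1])
    have cc: "{i\<in>A. (i,T)\<in>c\<times>{T}} = c" using c by auto
    have "Pow {T} = {{}, {T}}" by auto
    then show "(\<Sum>W1\<in>Pow {T}. Gm \<alpha> \<beta> \<gamma> \<delta> g A T (c\<times>{T}) W1) =
      (\<Prod>i\<in>A. if i\<in>c then \<alpha> else \<beta>) * (\<gamma> * g c True + \<delta> * g c False)"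
      unfolding Gm_def pr cc by (simp add: algebra_simps)
  qed
  finally show ?thesis .
qed

lemma factor:
  assumes "finite A"
  shows "(\<Sum>D\<in>Pow (A\<times>{..<T}). \<Sum>W\<in>Pow {..<T}. Fm \<alpha> \<beta> \<gamma> \<delta> g A T D W) =
    (\<Sum>c\<in>Pow A. (\<Prod>i\<in>A. if i\<in>c then \<alpha> else \<beta>) * (\<gamma> * g c True + \<delta> * g c False)) ^ T"
proof (induction T)
  case 0
  then show ?case by (simp add: Fm_def)
next
  case (Suc T)
  let ?c = "(\<Sum>c\<in>Pow A. (\<Prod>i\<in>A. if i\<in>c then \<alpha> else \<beta>) * (\<gamma> * g c True + \<delta> * g c False))"
  have e1: "A\<times>{..<Suc T} = A\<times>{..<T} \<union> A\<times>{T}" by auto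
  have e2: "{..<Suc T} = {..<T} \<union> {T}" by auto
  have "(\<Sum>D\<in>Pow (A\<times>{..<Suc T}). \<Sum>W\<in>Pow {..<Suc T}. Fm \<alpha> \<beta> \<gamma> \<delta> g A (Suc T) D W) =
     (\<Sum>D0\<in>Pow (A\<times>{..<T}). \<Sum>D1\<in>Pow (A\<times>{T}). \<Sum>W0\<in>Pow {..<T}. \<Sum>W1\<in>Pow {T}.
        Fm \<alpha> \<beta> \<gamma> \<delta> g A (Suc T) (D0 \<union> D1) (W0 \<union> W1))"
  proof -
    have "(\<Sum>D\<in>Pow (A\<times>{..<Suc T}). \<Sum>W\<in>Pow {..<Suc T}. Fm \<alpha> \<beta> \<gamma> \<delta> g A (Suc T) D W) =
      (\<Sum>D\<in>Pow (A\<times>{..<T} \<union> A\<times>{T}). \<Sum>W\<in>Pow ({..<T} \<union> {T}). Fm \<alpha> \<beta> \<gamma> \<delta> g A (Suc T) D W)"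
      by (subst e1, subst e2, rule refl)
    also have "\<dots> = (\<Sum>D0\<in>Pow (A\<times>{..<T}). \<Sum>D1\<in>Pow (A\<times>{T}). \<Sum>W\<in>Pow ({..<T} \<union> {T}). Fm \<alpha> \<beta> \<gamma> \<delta> g A (Suc T) (D0 \<union> D1) W)"
      by (rule sum_Pow_Un) (use assms in auto)
    also have "\<dots> = (\<Sum>D0\<in>Pow (A\<times>{..<T}). \<Sum>D1\<in>Pow (A\<times>{T}). \<Sum>W0\<in>Pow {..<T}. \<Sum>W1\<in>Pow {T}.
        Fm \<alpha> \<beta> \<gamma> \<delta> g A (Suc T) (D0 \<union> D1) (W0 \<union> W1))"
      by (intro sum.cong refl sum_Pow_Un) auto
    finally show ?thesis .
  qed
  also have "\<dots> = (\<Sum>D0\<in>Pow (A\<times>{..<T}). \<Sum>D1\<in>Pow (A\<times>{T}). \<Sum>W0\<in>Pow {..<T}. \<Sum>W1\<in>Pow {T}.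
        Fm \<alpha> \<beta> \<gamma> \<delta> g A T D0 W0 * Gm \<alpha> \<beta> \<gamma> \<delta> g A T D1 W1)"
    using assms by (intro sum.cong refl Fm_split) auto
  also have "\<dots> = (\<Sum>D0\<in>Pow (A\<times>{..<T}). \<Sum>W0\<in>Pow {..<T}. Fm \<alpha> \<beta> \<gamma> \<delta> g A T D0 W0 *
        (\<Sum>D1\<in>Pow (A\<times>{T}). \<Sum>W1\<in>Pow {T}. Gm \<alpha> \<beta> \<gamma> \<delta> g A T D1 W1))"
    by (subst sum.swap) (simp add: sum_distrib_left)
  also have "\<dots> = (\<Sum>D0\<in>Pow (A\<times>{..<T}). \<Sum>W0\<in>Pow {..<T}. Fm \<alpha> \<beta> \<gamma> \<delta> g A T D0 W0) * ?c"
    by (simp add: Gm_sum[OF assms] sum_distrib_right)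
  also have "\<dots> = ?c ^ Suc T" using Suc by simp
  finally show ?case .
qed

definition bad :: "nat set \<Rightarrow> nat \<Rightarrow> nat \<Rightarrow> (nat \<times> nat) set \<Rightarrow> nat set \<Rightarrow> bool" where
  "bad S j T D W \<longleftrightarrow> (\<forall>t<T. (j,t)\<in>D \<longrightarrow> (t\<in>W \<or> (\<exists>i\<in>S. (i,t)\<in>D)))"

lemma col_sum:
  fixes \<alpha> \<beta> :: real
  assumes A: "finite A" and S: "S \<subseteq> A" "j \<in> A" "j \<notin> S" and ab: "\<alpha> + \<beta> = 1"
  shows "(\<Sum>c\<in>Pow A. (\<Prod>i\<in>A. if i\<in>c then \<alpha> else \<beta>) * (if j \<in> c \<and> c \<inter> S = {} then 1 else 0)) = \<alpha> * \<beta> ^ card S"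
proof -
  let ?h = "\<lambda>i b. (if b then \<alpha> else \<beta>) * (if (i=j \<and> \<not>b) \<or> (i\<in>S \<and> b) then 0 else 1::real)"
  have "(\<Sum>c\<in>Pow A. (\<Prod>i\<in>A. if i\<in>c then \<alpha> else \<beta>) * (if j \<in> c \<and> c \<inter> S = {} then 1 else 0))
     = (\<Sum>c\<in>Pow A. \<Prod>i\<in>A. ?h i (i \<in> c))"
  proof (rule sum.cong[OF refl])
    fix c assume c: "c \<in> Pow A"
    have "(\<Prod>i\<in>A. ?h i (i \<in> c)) = (\<Prod>i\<in>A. if i\<in>c then \<alpha> else \<beta>) * (\<Prod>i\<in>A. if (i=j \<and> i \<notin> c) \<or> (i\<in>S \<and> i \<in> c) then 0 else 1::real)"
      by (simp add: prod.distrib)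
    also have "(\<Prod>i\<in>A. if (i=j \<and> i \<notin> c) \<or> (i\<in>S \<and> i \<in> c) then 0 else 1::real) = (if j \<in> c \<and> c \<inter> S = {} then 1 else 0)"
      using prod01[OF A, of "\<lambda>i. (i=j \<and> i \<notin> c) \<or> (i\<in>S \<and> i \<in> c)"] S by auto
    finally show "(\<Prod>i\<in>A. if i\<in>c then \<alpha> else \<beta>) * (if j \<in> c \<and> c \<inter> S = {} then 1 else 0) = (\<Prod>i\<in>A. ?h i (i \<in> c))" by simp
  qed
  also have "\<dots> = (\<Prod>i\<in>A. ?h i True + ?h i False)" by (rule sum_Pow_prod[OF A])
  also have "\<dots> = (\<Prod>i\<in>A. if i = j then \<alpha> else if i \<in> S then \<beta> else 1)"
    using S ab by (intro prod.cong refl) auto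
  also have "\<dots> = (\<Prod>i\<in>insert j S. if i = j then \<alpha> else if i \<in> S then \<beta> else 1)"
    using S A by (intro prod.mono_neutral_right) auto
  also have "\<dots> = \<alpha> * (\<Prod>i\<in>S. if i = j then \<alpha> else if i \<in> S then \<beta> else 1)"
    using S A finite_subset[OF S(1) A] by simp
  also have "(\<Prod>i\<in>S. if i = j then \<alpha> else if i \<in> S then \<beta> else 1) = (\<Prod>i\<in>S. \<beta>)"
    using S by (intro prod.cong refl) auto
  finally show ?thesis by simp
qed

lemma col_sum1:
  fixes \<alpha> \<beta> :: real
  assumes A: "finite A" and ab: "\<alpha> + \<beta> = 1"
  shows "(\<Sum>c\<in>Pow A. (\<Prod>i\<in>A. if i\<in>c then \<alpha> else \<beta>)) = 1"
  using sum_Pow_prod[OF A, of "\<lambda>i b. if b then \<alpha> else \<beta>"] ab by simp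

lemma err_term:
  fixes q :: real
  assumes S: "S \<subseteq> {..<N}" "card S = K" "j < N" "j \<notin> S"
  shows "(\<Sum>D\<in>Pow ({..<N}\<times>{..<T}). \<Sum>W\<in>Pow {..<T}. design_prob N K T D * noise_prob q T W *
           (if bad S j T D W then 1 else 0)) = (1 - (1-q) * (1/real K) * (1 - 1/real K) ^ K) ^ T"
proof -
  define g where "g = (\<lambda>c b. if j \<in> c \<and> \<not> b \<and> c \<inter> S = {} then 0 else 1::real)"
  let ?A = "{..<N}"
  have "(\<Sum>D\<in>Pow (?A\<times>{..<T}). \<Sum>W\<in>Pow {..<T}. design_prob N K T D * noise_prob q T W *
           (if bad S j T D W then 1 else 0)) =
       (\<Sum>D\<in>Pow (?A\<times>{..<T}). \<Sum>W\<in>Pow {..<T}. Fm (1/real K) (1 - 1/real K) q (1-q) g ?A T D W)"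
  proof (intro sum.cong refl)
    fix D W assume D: "D \<in> Pow (?A\<times>{..<T})" and W: "W \<in> Pow {..<T}"
    have "(\<Prod>t\<in>{..<T}. g {i\<in>?A. (i,t)\<in>D} (t\<in>W)) = (if bad S j T D W then 1 else 0)"
    proof -
      have "(\<Prod>t\<in>{..<T}. g {i\<in>?A. (i,t)\<in>D} (t\<in>W)) =
         (if \<exists>t\<in>{..<T}. j \<in> {i\<in>?A. (i,t)\<in>D} \<and> \<not> t\<in>W \<and> {i\<in>?A. (i,t)\<in>D} \<inter> S = {} then 0 else 1)"
        unfolding g_def by (rule prod01) simp
      also have "(\<exists>t\<in>{..<T}. j \<in> {i\<in>?A. (i,t)\<in>D} \<and> \<not> t\<in>W \<and> {i\<in>?A. (i,t)\<in>D} \<inter> S = {}) \<longleftrightarrow> \<not> bad S j T D W"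
        unfolding bad_def using S by auto
      finally show ?thesis by simp
    qed
    then show "design_prob N K T D * noise_prob q T W * (if bad S j T D W then 1 else 0) =
         Fm (1/real K) (1 - 1/real K) q (1-q) g ?A T D W"
      unfolding Fm_def design_prob_def noise_prob_def by simp
  qed
  also have "\<dots> = (\<Sum>c\<in>Pow ?A. (\<Prod>i\<in>?A. if i\<in>c then 1/real K else 1 - 1/real K) * (q * g c True + (1-q) * g c False)) ^ T"
    by (rule factor) simp
  also have "(\<Sum>c\<in>Pow ?A. (\<Prod>i\<in>?A. if i\<in>c then 1/real K else 1 - 1/real K) * (q * g c True + (1-q) * g c False))
     = (\<Sum>c\<in>Pow ?A. (\<Prod>i\<in>?A. if i\<in>c then 1/real K else 1 - 1/real K)) -
       (1-q) * (\<Sum>c\<in>Pow ?A. (\<Prod>i\<in>?A. if i\<in>c then 1/real K else 1 - 1/real K) * (if j \<in> c \<and> c \<inter> S = {} then 1 else 0))"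
    unfolding g_def sum_distrib_left sum_subtractf[symmetric] by (intro sum.cong refl) (simp add: algebra_simps)
  also have "\<dots> = 1 - (1-q) * (1/real K) * (1 - 1/real K) ^ K"
    using col_sum[of ?A S j "1/real K" "1 - 1/real K"] col_sum1[of ?A "1/real K" "1 - 1/real K"] S by simp
  finally show ?thesis .
qed

lemma design_nonneg: "K \<ge> 1 \<Longrightarrow> design_prob N K T D \<ge> 0"
  unfolding design_prob_def by (intro prod_nonneg) (auto simp: field_simps)

lemma noise_nonneg: "0 \<le> q \<Longrightarrow> q \<le> 1 \<Longrightarrow> noise_prob q T W \<ge> 0"
  unfolding noise_prob_def by (intro prod_nonneg) auto

lemma pointwise:
  assumes S: "S \<in> subsets_K N K" and K: "K \<ge> 1" and q: "0 \<le> q" "q < 1"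
  shows "design_prob N K T D * noise_prob q T W * (if ml_error q N K T D S (outcome T D S W) then 1 else 0)
     \<le> (\<Sum>j\<in>{..<N}-S. design_prob N K T D * noise_prob q T W * (if bad S j T D W then 1 else 0))"
proof -
  have dn: "design_prob N K T D \<ge> 0" using K by (rule design_nonneg)
  have nn: "noise_prob q T W \<ge> 0" using q by (intro noise_nonneg) auto
  have rhs: "0 \<le> (\<Sum>j\<in>{..<N}-S. design_prob N K T D * noise_prob q T W * (if bad S j T D W then 1 else 0))"
    using dn nn by (intro sum_nonneg) auto
  show ?thesis
  proof (cases "ml_error q N K T D S (outcome T D S W) \<and> noise_prob q T W \<noteq> 0")
    case False
    then show ?thesis using rhs by auto
  next
    case True
    let ?Y = "outcome T D S W"
    from True obtain S' where S': "S' \<in> subsets_K N K" "S' \<noteq> S" "likelihood q T D S' ?Y \<ge> likelihood q T D S ?Y"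
      unfolding ml_error_def by blast
    have qW: "q \<noteq> 0" if "t < T" "t \<in> W" for t
    proof
      assume "q = 0"
      then have "noise_prob q T W = 0" unfolding noise_prob_def using that
        by (intro prod_zero) auto
      with True show False by simp
    qed
    have "likelihood q T D S ?Y > 0"
      unfolding likelihood_def
    proof (intro prod_pos ballI)
      fix t assume t: "t \<in> {..<T}"
      show "0 < (if \<exists>j\<in>S. (j, t) \<in> D then if t \<in> ?Y then 1 else 0 else if t \<in> ?Y then q else 1 - q)"
        using t qW[of t] q unfolding outcome_def by auto
    qed
    with S' have "likelihood q T D S' ?Y \<noteq> 0" by simp
    then have cov: "t \<in> ?Y" if "t < T" "\<exists>j\<in>S'. (j, t) \<in> D" for t
      unfolding likelihood_def using that by (auto simp: prod_zero_iff split: if_splits)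
    have fin: "finite S" using S unfolding subsets_K_def by (auto intro: finite_subset)
    have "\<not> S' \<subseteq> S"
    proof
      assume "S' \<subseteq> S"
      then have "S' = S" using card_subset_eq[OF fin] S S' unfolding subsets_K_def by auto
      with S' show False by simp
    qed
    then obtain j where j: "j \<in> S'" "j \<notin> S" by blast
    have jN: "j \<in> {..<N} - S" using j S' unfolding subsets_K_def by auto
    have "bad S j T D W" unfolding bad_def
    proof (intro allI impI)
      fix t assume "t < T" "(j, t) \<in> D"
      then have "t \<in> ?Y" using cov j by blast
      then show "t \<in> W \<or> (\<exists>i\<in>S. (i, t) \<in> D)" unfolding outcome_def by auto
    qed
    then have "design_prob N K T D * noise_prob q T W * (if ml_error q N K T D S ?Y then 1 else 0)
       = design_prob N K T D * noise_prob q T W * (if bad S j T D W then 1 else 0)" using True by simp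
    also have "\<dots> \<le> (\<Sum>j\<in>{..<N}-S. design_prob N K T D * noise_prob q T W * (if bad S j T D W then 1 else 0))"
      by (rule member_le_sum[OF jN]) (use dn nn in auto)
    finally show ?thesis .
  qed
qed

lemma avg_bound:
  assumes K: "K \<ge> 1" and q: "0 \<le> q" "q < 1"
  shows "avg_error_prob q N K T \<le> real N * (1 - (1-q) * (1/real K) * (1 - 1/real K) ^ K) ^ T"
    and "0 \<le> avg_error_prob q N K T"
proof -
  define c where "c = (1 - (1-q) * (1/real K) * (1 - 1/real K) ^ K)"
  have "(1-q) * (1/real K) * (1 - 1/real K) ^ K \<le> 1 * 1 * 1"
    using K q by (intro mult_mono power_le_one) (auto simp: field_simps)
  then have c0: "c \<ge> 0" unfolding c_def by simp
  have finS: "finite (subsets_K N K)" unfolding subsets_K_def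
    by (rule finite_subset[of _ "Pow {..<N}"]) auto
  have cardS: "card (subsets_K N K) = N choose K"
    unfolding subsets_K_def using n_subsets[of "{..<N}" K] by simp
  let ?f = "\<lambda>S D W. design_prob N K T D * noise_prob q T W * (if ml_error q N K T D S (outcome T D S W) then 1 else 0)"
  have "(\<Sum>S\<in>subsets_K N K. \<Sum>D\<in>Pow ({..<N} \<times> {..<T}). \<Sum>W\<in>Pow {..<T}. ?f S D W) \<le>
     (\<Sum>S\<in>subsets_K N K. \<Sum>D\<in>Pow ({..<N} \<times> {..<T}). \<Sum>W\<in>Pow {..<T}.
        \<Sum>j\<in>{..<N}-S. design_prob N K T D * noise_prob q T W * (if bad S j T D W then 1 else 0))"
    by (intro sum_mono pointwise) (use K q in auto)
  also have "\<dots> = (\<Sum>S\<in>subsets_K N K. \<Sum>j\<in>{..<N}-S. \<Sum>D\<in>Pow ({..<N} \<times> {..<T}). \<Sum>W\<in>Pow {..<T}.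
        design_prob N K T D * noise_prob q T W * (if bad S j T D W then 1 else 0))"
  proof (intro sum.cong refl)
    fix S
    show "(\<Sum>D\<in>Pow ({..<N} \<times> {..<T}). \<Sum>W\<in>Pow {..<T}.
        \<Sum>j\<in>{..<N}-S. design_prob N K T D * noise_prob q T W * (if bad S j T D W then 1 else 0)) =
        (\<Sum>j\<in>{..<N}-S. \<Sum>D\<in>Pow ({..<N} \<times> {..<T}). \<Sum>W\<in>Pow {..<T}.
        design_prob N K T D * noise_prob q T W * (if bad S j T D W then 1 else 0))"
      by (subst sum.swap, subst (2) sum.swap) (rule refl)
  qed
  also have "\<dots> = (\<Sum>S\<in>subsets_K N K. \<Sum>j\<in>{..<N}-S. c ^ T)"
  proof (rule sum.cong[OF refl], rule sum.cong[OF refl])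
    fix S j assume S: "S \<in> subsets_K N K" and j: "j \<in> {..<N} - S"
    show "(\<Sum>D\<in>Pow ({..<N} \<times> {..<T}). \<Sum>W\<in>Pow {..<T}.
        design_prob N K T D * noise_prob q T W * (if bad S j T D W then 1 else 0)) = c ^ T"
      unfolding c_def by (rule err_term) (use S j in \<open>auto simp: subsets_K_def\<close>)
  qed
  also have "\<dots> \<le> (\<Sum>S\<in>subsets_K N K. real N * c ^ T)"
  proof (intro sum_mono)
    fix S assume "S \<in> subsets_K N K"
    have "card ({..<N} - S) \<le> N" using card_mono[of "{..<N}" "{..<N} - S"] by auto
    then have "real (card ({..<N} - S)) \<le> real N" by simp
    moreover have "c ^ T \<ge> 0" using c0 by simp
    ultimately have "real (card ({..<N} - S)) * c ^ T \<le> real N * c ^ T" by (rule mult_right_mono)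
    then show "(\<Sum>j\<in>{..<N}-S. c ^ T) \<le> real N * c ^ T" by simp
  qed
  also have "\<dots> = real (N choose K) * (real N * c ^ T)" using cardS by simp
  finally have up: "(\<Sum>S\<in>subsets_K N K. \<Sum>D\<in>Pow ({..<N} \<times> {..<T}). \<Sum>W\<in>Pow {..<T}. ?f S D W)
      \<le> real (N choose K) * (real N * c ^ T)" .
  have nn: "0 \<le> (\<Sum>S\<in>subsets_K N K. \<Sum>D\<in>Pow ({..<N} \<times> {..<T}). \<Sum>W\<in>Pow {..<T}. ?f S D W)"
    using design_nonneg[OF K] noise_nonneg[of q] q by (intro sum_nonneg) auto
  show "0 \<le> avg_error_prob q N K T" unfolding avg_error_prob_def using nn by simp
  have "avg_error_prob q N K T \<le> (1 / real (N choose K)) * (real (N choose K) * (real N * c ^ T))"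
    unfolding avg_error_prob_def by (rule mult_left_mono[OF up]) simp
  also have "\<dots> \<le> real N * c ^ T"
  proof -
    have x0: "real N * c ^ T \<ge> 0" using c0 by simp
    show ?thesis
    proof (cases "N choose K = 0")
      case True
      then show ?thesis using x0 by simp
    next
      case False
      then show ?thesis by simp
    qed
  qed
  finally show "avg_error_prob q N K T \<le> real N * (1 - (1-q) * (1/real K) * (1 - 1/real K) ^ K) ^ T"
    unfolding c_def .
qed

lemma pow_lower:
  assumes K: "K \<ge> (2::nat)"
  shows "(1 - 1/real K) ^ K \<ge> 1/9"
proof -
  define x where "x = 1/real K"
  have x0: "0 \<le> x" "x \<le> 1/2" using K unfolding x_def by (auto simp: field_simps)
  have lnb: "- x - 2 * x\<^sup>2 \<le> ln (1 - x)" by (rule ln_one_minus_pos_lower_bound[OF x0])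
  have "real K * (- x - 2 * x\<^sup>2) = -1 - 2 / real K"
    using K unfolding x_def by (simp add: field_simps power2_eq_square)
  also have "\<dots> \<ge> -2" using K by (simp add: field_simps)
  finally have "-2 \<le> real K * ln (1 - x)"
    using lnb K by (smt (verit) mult_left_mono of_nat_0_le_iff)
  then have "exp (-2) \<le> exp (real K * ln (1 - x))" by simp
  also have "\<dots> = exp (ln (1 - x)) ^ K" by (rule exp_of_nat_mult)
  also have "exp (ln (1 - x)) = 1 - x" using x0 by simp
  finally have a: "exp (-2) \<le> (1 - x) ^ K" .
  have "exp (2::real) = exp 1 * exp 1" using exp_add[of "1::real" 1] by simp
  also have "\<dots> \<le> 3 * 3" using exp_le by (intro mult_mono) auto
  finally have "exp (2::real) \<le> 9" by simp
  then have "1/9 \<le> exp (-2::real)" by (simp add: exp_minus' field_simps)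
  with a show ?thesis unfolding x_def by simp
qed

lemma asym_bound:
  assumes K: "K \<ge> (2::nat)" and N: "N \<ge> (3::nat)" and q: "0 \<le> q" "q < 1"
    and T: "real T \<ge> 18 * real K * ln (real N) / (1 - q)"
  shows "avg_error_prob q N K T \<le> 1 / real N"
proof -
  define c where "c = 1 - (1-q) * (1/real K) * (1 - 1/real K) ^ K"
  define a where "a = (1-q) / (9 * real K)"
  have c0: "0 \<le> c" unfolding c_def
  proof -
    have b: "0 \<le> 1/real K" "1/real K \<le> 1" "0 \<le> 1 - 1/real K" "1 - 1/real K \<le> 1" using K by (auto simp: field_simps)
    have "(1 - 1/real K) ^ K \<le> 1" using b by (intro power_le_one) auto
    moreover have "(1-q) * (1/real K) \<le> 1" using b q by (intro mult_le_one) auto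
    ultimately have "(1-q) * (1/real K) * (1 - 1/real K) ^ K \<le> 1"
      using b q by (intro mult_le_one) auto
    then show "0 \<le> 1 - (1-q) * (1/real K) * (1 - 1/real K) ^ K" by simp
  qed
  have "(1-q) * (1/real K) * (1/9) \<le> (1-q) * (1/real K) * (1 - 1/real K) ^ K"
    using pow_lower[OF K] q K by (intro mult_left_mono) auto
  then have c1: "c \<le> 1 - a" unfolding c_def a_def by (simp add: field_simps)
  have "1 - a \<le> exp (-a)" using exp_ge_add_one_self[of "-a"] by simp
  then have "c \<le> exp (-a)" using c1 by simp
  then have "c ^ T \<le> exp (-a) ^ T" using c0 by (intro power_mono) auto
  also have "\<dots> = exp (real T * (-a))" by (rule exp_of_nat_mult[symmetric])
  also have "\<dots> \<le> exp (- (2 * ln (real N)))"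
  proof -
    have "a * real T \<ge> a * (18 * real K * ln (real N) / (1 - q))"
      using T q K unfolding a_def by (intro mult_left_mono) auto
    also have "a * (18 * real K * ln (real N) / (1 - q)) = 2 * ln (real N)"
      unfolding a_def using q K by (simp add: field_simps)
    finally show ?thesis by (simp add: algebra_simps)
  qed
  also have "exp (- (2 * ln (real N))) = 1 / real N ^ 2"
  proof -
    have "exp (2 * ln (real N)) = exp (ln (real N)) ^ 2" using exp_of_nat_mult[of 2 "ln (real N)"] by simp
    also have "\<dots> = real N ^ 2" using N by simp
    finally show ?thesis by (simp add: exp_minus')
  qed
  finally have cT: "c ^ T \<le> 1 / real N ^ 2" .
  have "avg_error_prob q N K T \<le> real N * c ^ T"
    using avg_bound(1)[of K q N T] K q unfolding c_def by simp
  also have "\<dots> \<le> real N * (1 / real N ^ 2)" using cT by (intro mult_left_mono) auto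
  also have "\<dots> = 1 / real N" using N by (simp add: power2_eq_square)
  finally show ?thesis .
qed

theorem theorem7:
  "\<exists>C>0. \<forall>q::real. 0 \<le> q \<and> q < 1 \<longrightarrow>
     (\<forall>N K :: nat \<Rightarrow> nat.
        filterlim N at_top sequentially \<and> filterlim K at_top sequentially \<and>
        ((\<lambda>n. real (K n) / real (N n)) \<longlonglongrightarrow> 0) \<longrightarrow>
        (\<exists>T :: nat \<Rightarrow> nat.
           (\<forall>\<^sub>F n in sequentially.
              real (T n) \<le> C * real (K n) * ln (real (N n)) / (1 - q)) \<and>
           ((\<lambda>n. avg_error_prob q (N n) (K n) (T n)) \<longlonglongrightarrow> 0)))"
proof (rule exI[of _ "19::real"], rule conjI, simp, intro allI impI)
  fix q :: real and N K :: "nat \<Rightarrow> nat"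
  assume q: "0 \<le> q \<and> q < 1"
  assume lim: "filterlim N at_top sequentially \<and> filterlim K at_top sequentially \<and>
        ((\<lambda>n. real (K n) / real (N n)) \<longlonglongrightarrow> 0)"
  define T where "T = (\<lambda>n. nat \<lceil>18 * real (K n) * ln (real (N n)) / (1 - q)\<rceil>)"
  have evK: "\<forall>\<^sub>F n in sequentially. 2 \<le> K n" using lim unfolding filterlim_at_top by blast
  have evN: "\<forall>\<^sub>F n in sequentially. 3 \<le> N n" using lim unfolding filterlim_at_top by blast
  have good: "\<forall>\<^sub>F n in sequentially. 2 \<le> K n \<and> 3 \<le> N n" using evK evN by (rule eventually_conj)
  have key: "real (T n) \<le> 19 * real (K n) * ln (real (N n)) / (1 - q) \<and>
      real (T n) \<ge> 18 * real (K n) * ln (real (N n)) / (1 - q)"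
    if n: "2 \<le> K n \<and> 3 \<le> N n" for n
  proof -
    have "exp 1 \<le> real (N n)" using exp_le n by linarith
    then have ln1: "1 \<le> ln (real (N n))" using n by (simp add: ln_ge_iff)
    define x where "x = 18 * real (K n) * ln (real (N n)) / (1 - q)"
    have x0: "0 \<le> x" unfolding x_def using q ln1 by auto
    have Tx: "real (T n) = of_int \<lceil>x\<rceil>" unfolding T_def x_def[symmetric] using x0 by simp
    have "1 * 1 \<le> real (K n) * ln (real (N n))" using n ln1 by (intro mult_mono) auto
    then have "1 - q \<le> real (K n) * ln (real (N n))" using q by linarith
    then have one: "1 \<le> real (K n) * ln (real (N n)) / (1 - q)" using q by (simp add: field_simps)
    have "real (T n) \<le> x + 1" unfolding Tx by linarith
    also have "\<dots> \<le> 19 * real (K n) * ln (real (N n)) / (1 - q)"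
    proof -
      define y where "y = real (K n) * ln (real (N n)) / (1 - q)"
      have e1: "x = 18 * y" unfolding x_def y_def by simp
      have e2: "19 * real (K n) * ln (real (N n)) / (1 - q) = 19 * y" unfolding y_def by simp
      have "1 \<le> y" using one unfolding y_def .
      then have "x + 1 \<le> 19 * y" using e1 by linarith
      then show ?thesis using e2 by simp
    qed
    finally have up: "real (T n) \<le> 19 * real (K n) * ln (real (N n)) / (1 - q)" .
    have "x \<le> real (T n)" unfolding Tx by linarith
    with up show ?thesis unfolding x_def by simp
  qed
  have evT: "\<forall>\<^sub>F n in sequentially. real (T n) \<le> 19 * real (K n) * ln (real (N n)) / (1 - q)"
    using good by eventually_elim (use key in blast)
  have ub: "\<forall>\<^sub>F n in sequentially. avg_error_prob q (N n) (K n) (T n) \<le> 1 / real (N n)"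
    using good
  proof eventually_elim
    case (elim n)
    then show ?case using asym_bound[of "K n" "N n" q "T n"] key[OF elim] q by auto
  qed
  have lb: "\<forall>\<^sub>F n in sequentially. 0 \<le> avg_error_prob q (N n) (K n) (T n)"
    using good
  proof eventually_elim
    case (elim n)
    then show ?case using avg_bound(2)[of "K n" q] q by auto
  qed
  have Nr: "filterlim (\<lambda>n. real (N n)) at_top sequentially"
    using filterlim_compose[OF filterlim_real_sequentially] lim by blast
  have "(\<lambda>n. inverse (real (N n))) \<longlonglongrightarrow> 0" by (rule tendsto_inverse_0_at_top[OF Nr])
  then have z: "(\<lambda>n. 1 / real (N n)) \<longlonglongrightarrow> 0" by (simp add: inverse_eq_divide)
  have "(\<lambda>n. avg_error_prob q (N n) (K n) (T n)) \<longlonglongrightarrow> 0"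
    by (rule tendsto_sandwich[OF lb ub tendsto_const z])
  with evT show "\<exists>T :: nat \<Rightarrow> nat.
           (\<forall>\<^sub>F n in sequentially.
              real (T n) \<le> 19 * real (K n) * ln (real (N n)) / (1 - q)) \<and>
           ((\<lambda>n. avg_error_prob q (N n) (K n) (T n)) \<longlonglongrightarrow> 0)" by blast
qed

end
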